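(* Let $X$ and $Y$ be metric spaces with $X$ complete, and let $Y'\subset Y$ be a subset. Let $f\colon X\to Y$ be continuous and set $X':=f^{-1}(Y')$. Assume that the restriction $f|_{X'}\colon X'\to Y'$ is open and surjective (with $X'$, $Y'$ carrying the induced metrics). Then there exists a subset $X_0\subset X'$ which is relatively closed in $X'$, such that $f|_{X_0}\colon X_0\to Y'$ is surjective and $\mathrm{dens}(X_0)=\mathrm{dens}(Y')$.
   Context: For a metric space $W$, $\mathrm{dens}(W)$ denotes the smallest cardinality of a dense subset of $W$. A map is open if it maps open sets of its domain to open sets of its target. *)

theory Defs
  imports "HOL-Analysis.Analysis"
begin

definition dense_subset :: "'a::topological_space set \<Rightarrow> 'a set \<Rightarrow> bool" where
  "dense_subset D S \<longleftrightarrow> D \<subseteq> S \<and> S \<subseteq> closure D"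

definition dens :: "'a::topological_space set \<Rightarrow> 'a rel" where
  "dens S = card_of (SOME D. dense_subset D S \<and>
      (\<forall>E. dense_subset E S \<longrightarrow> (card_of D, card_of E) \<in> ordLeq))"

end

theory Submission
  imports Defs
begin

unbundle cardinal_syntax

lemma dens_min:
  fixes S :: "'a::topological_space set"
  shows "\<exists>D. dense_subset D S \<and> (\<forall>E. dense_subset E S \<longrightarrow> |D| \<le>o |E| )"
proof -
  let ?R = "{ |E| | E. dense_subset E S}"
  have "dense_subset S S" by (simp add: dense_subset_def closure_subset)
  then have "?R \<noteq> {}" by blast
  moreover have "\<forall>r\<in>?R. Well_order r" using card_of_Well_order by blast
  ultimately obtain r where "r \<in> ?R" "\<forall>r'\<in>?R. r \<le>o r'"
    using exists_minim_Well_order[of ?R] by blast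
  then show ?thesis by blast
qed

lemma dens_le:
  fixes S :: "'a::topological_space set"
  assumes "dense_subset E S" shows "dens S \<le>o |E|"
  using someI_ex[OF dens_min[of S]] assms unfolding dens_def by blast

lemma dens_ex:
  fixes S :: "'a::topological_space set"
  shows "\<exists>D. dense_subset D S \<and> |D| =o dens S"
  using someI_ex[OF dens_min[of S]] card_of_refl unfolding dens_def by blast

lemma aux3: "(x::real) \<le> 2*u \<Longrightarrow> u \<le> v \<Longrightarrow> v < e/2 \<Longrightarrow> x < e"
  by linarith

lemma aux4: "(x::real) \<le> a - b \<Longrightarrow> 0 \<le> b \<Longrightarrow> x \<le> a"
  by linarith

lemma geo_cauchy:
  fixes a :: "nat \<Rightarrow> 'a::metric_space"
  assumes h: "\<And>n. dist (a n) (a (Suc n)) < (1/2)^n"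
  shows "Cauchy a"
proof -
  have d: "dist (a m) (a (m+k)) \<le> 2*(1/2)^m - 2*(1/2)^(m+k)" for m k
  proof (induction k)
    case 0 then show ?case by simp
  next
    case (Suc k)
    have "dist (a m) (a (m+Suc k)) \<le> dist (a m) (a (m+k)) + dist (a (m+k)) (a (Suc (m+k)))"
      using dist_triangle[of "a m" "a (m+Suc k)" "a (m+k)"] by simp
    also have "\<dots> \<le> 2*(1/2)^m - 2*(1/2)^(m+k) + (1/2)^(m+k)"
      by (rule add_mono[OF Suc.IH less_imp_le[OF h]])
    also have "\<dots> = 2*(1/2)^m - 2*(1/2)^(m+Suc k)" by simp
    finally show ?case .
  qed
  have d2: "dist (a m) (a n) \<le> 2*(1/2)^m" if "m \<le> n" for m n
  proof -
    define k where "k = n - m"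
    have "n = m + k" using that unfolding k_def by simp
    moreover have "0 \<le> 2*(1/2::real)^(m+k)" by simp
    ultimately show ?thesis using aux4[OF d[of m k]] by simp
  qed
  show ?thesis unfolding Cauchy_def
  proof (intro allI impI)
    fix e :: real assume "e > 0"
    then obtain N where N: "(1/2::real)^N < e/2"
      using real_arch_pow_inv[of "e/2" "1/2"] by auto
    have "dist (a m) (a n) < e" if "m \<ge> N" "n \<ge> N" for m n
    proof -
      have p: "(1/2::real)^m \<le> (1/2)^N" "(1/2::real)^n \<le> (1/2)^N" using that
        by (simp_all add: power_decreasing)
      show ?thesis
      proof (cases "m \<le> n")
        case True then show ?thesis using aux3[OF d2[of m n] p(1) N] by simp
      next
        case False
        then have "dist (a n) (a m) \<le> 2*(1/2)^n" using d2[of n m] by simp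
        then show ?thesis using aux3[OF _ p(2) N] dist_commute[of "a m" "a n"] by simp
      qed
    qed
    then show "\<exists>M. \<forall>m\<ge>M. \<forall>n\<ge>M. dist (a m) (a n) < e" by blast
  qed
qed

theorem theorem2p1:
  fixes f :: "'a::complete_space \<Rightarrow> 'b::metric_space"
    and Y' :: "'b set"
  assumes "continuous_on UNIV f"
    and "\<forall>U. openin (top_of_set (f -` Y')) U \<longrightarrow> openin (top_of_set Y') (f ` U)"
    and "f ` (f -` Y') = Y'"
  shows "\<exists>X0. X0 \<subseteq> f -` Y' \<and> closedin (top_of_set (f -` Y')) X0 \<and>
           f ` X0 = Y' \<and> (dens X0, dens Y') \<in> ordIso"
proof -
  let ?X = "f -` Y'"
  obtain D where D: "dense_subset D Y'" and Dc: "|D| =o dens Y'" using dens_ex by blast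
  have DY: "D \<subseteq> Y'" "Y' \<subseteq> closure D" using D unfolding dense_subset_def by auto
  have lower: "dens Y' \<le>o dens X0" if "X0 \<subseteq> ?X" "f ` X0 = Y'" for X0
  proof -
    obtain D0 where D0: "dense_subset D0 X0" "|D0| =o dens X0" using dens_ex by blast
    have "f ` closure D0 \<subseteq> closure (f ` D0)"
      by (rule image_closure_subset[OF continuous_on_subset[OF assms(1)]]) (auto simp: closure_subset)
    moreover have "X0 \<subseteq> closure D0" "D0 \<subseteq> X0" using D0(1) unfolding dense_subset_def by auto
    ultimately have "dense_subset (f ` D0) Y'" using that(2) unfolding dense_subset_def by blast
    then have "dens Y' \<le>o |f ` D0|" by (rule dens_le)
    also have "|f ` D0| \<le>o |D0|" by (rule card_of_image)
    also have "|D0| \<le>o dens X0" using D0(2) ordIso_iff_ordLeq by blast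
    finally show ?thesis .
  qed
  show ?thesis
  proof (cases "finite D")
    case True
    then have "closure D = D" using finite_imp_closed closure_closed by blast
    then have YD: "Y' = D" using DY subset_antisym by metis
    define s where "s y = (SOME x. x \<in> ?X \<and> f x = y)" for y
    have s: "s y \<in> ?X \<and> f (s y) = y" if "y \<in> Y'" for y
    proof -
      have "y \<in> f ` ?X" unfolding assms(3) by (rule that)
      then obtain x where "x \<in> ?X" "f x = y" by (rule imageE) simp
      then show ?thesis unfolding s_def using someI[of "\<lambda>x. x \<in> ?X \<and> f x = y" x] by blast
    qed
    let ?Z = "s ` Y'"
    have fin: "finite ?Z" using True YD by simp
    have sub: "?Z \<subseteq> ?X" using s by auto
    have "closedin (top_of_set ?X) (?X \<inter> ?Z)"
      by (rule closedin_closed_Int[OF finite_imp_closed[OF fin]])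
    moreover have "?X \<inter> ?Z = ?Z" using sub by blast
    ultimately have cl: "closedin (top_of_set ?X) ?Z" by simp
    have img: "f ` ?Z = Y'"
    proof -
      have "f ` ?Z = (\<lambda>y. f (s y)) ` Y'" by (simp add: image_image)
      also have "\<dots> = (\<lambda>y. y) ` Y'" by (rule image_cong) (use s in auto)
      finally show ?thesis by simp
    qed
    have "dens ?Z \<le>o |?Z|" by (rule dens_le) (simp add: dense_subset_def closure_subset)
    also have "|?Z| \<le>o |Y'|" by (rule card_of_image)
    also have "|Y'| =o dens Y'" using Dc YD by simp
    finally have up: "dens ?Z \<le>o dens Y'" .
    have iso: "(dens ?Z, dens Y') \<in> ordIso"
      unfolding ordIso_iff_ordLeq by (rule conjI[OF up lower[OF sub img]])
    show ?thesis by (rule exI[of _ "?Z"], intro conjI; fact)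
  next
    case False
    have K: "\<exists>d\<in>D. \<exists>m::nat. dist d (f x) < 1 / real (Suc m) \<and>
              ball d (1 / real (Suc m)) \<inter> Y' \<subseteq> f ` (ball x \<epsilon> \<inter> ?X)"
      if x: "x \<in> ?X" and e: "\<epsilon> > 0" for x \<epsilon>
    proof -
      have "openin (top_of_set ?X) (?X \<inter> ball x \<epsilon>)" by (rule openin_open_Int) simp
      then have op: "openin (top_of_set Y') (f ` (ball x \<epsilon> \<inter> ?X))"
        using assms(2) by (simp add: Int_commute)
      have fx: "f x \<in> f ` (ball x \<epsilon> \<inter> ?X)" using x e by simp
      obtain \<rho> where \<rho>: "\<rho> > 0" "ball (f x) \<rho> \<inter> Y' \<subseteq> f ` (ball x \<epsilon> \<inter> ?X)"
        using op fx unfolding openin_contains_ball by blast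
      obtain m :: nat where m: "inverse (real (Suc m)) < \<rho>/2"
        using reals_Archimedean[of "\<rho>/2"] \<rho>(1) by auto
      define q where "q = 1 / real (Suc m)"
      have q: "q > 0" "q < \<rho>/2" using m unfolding q_def by (auto simp: field_simps)
      have "f x \<in> closure D" using DY x by auto
      then obtain d where d: "d \<in> D" "dist d (f x) < q"
        using q(1) unfolding closure_approachable by blast
      have "ball d q \<subseteq> ball (f x) \<rho>"
      proof
        fix z assume "z \<in> ball d q"
        then have "dist d z < q" by simp
        moreover have "dist (f x) z \<le> dist (f x) d + dist d z" by (rule dist_triangle)
        moreover have "dist (f x) d = dist d (f x)" by (rule dist_commute)
        ultimately have "dist (f x) z < \<rho>" using d(2) q by linarith
        then show "z \<in> ball (f x) \<rho>" by simp
      qed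
      then have "ball d q \<inter> Y' \<subseteq> f ` (ball x \<epsilon> \<inter> ?X)" using \<rho>(2) by blast
      then show ?thesis using d unfolding q_def by blast
    qed
    define P where "P k a d m x \<longleftrightarrow> x \<in> ?X \<and> dist a x < (1/2::real)^k \<and>
        ball d (1 / real (Suc m)) \<inter> Y' \<subseteq> f ` (ball x ((1/2)^Suc k) \<inter> ?X)" for k a d m x
    define P0 where "P0 d m x \<longleftrightarrow> x \<in> ?X \<and>
        ball d (1 / real (Suc m)) \<inter> Y' \<subseteq> f ` (ball x 1 \<inter> ?X)" for d m x
    define g where "g k a d m = (SOME x. P k a d m x)" for k a d m
    define g0 where "g0 d m = (SOME x. P0 d m x)" for d m
    define I0 where "I0 = {(d, m). d \<in> D \<and> (\<exists>x. P0 d m x)}"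
    define A0 where "A0 = (\<lambda>(d, m). g0 d m) ` I0"
    define I where "I k B = {(a, d, m). a \<in> B \<and> d \<in> D \<and> (\<exists>x. P k a d m x)}" for k B
    define A where "A = rec_nat A0 (\<lambda>k B. (\<lambda>(a, d, m). g k a d m) ` I k B)"
    have A0': "A 0 = A0" by (simp add: A_def)
    have AS: "A (Suc k) = (\<lambda>(a, d, m). g k a d m) ` I k (A k)" for k by (simp add: A_def)
    have AX: "A k \<subseteq> ?X" for k
    proof (cases k)
      case 0
      have "g0 d m \<in> ?X" if "(d, m) \<in> I0" for d m
      proof -
        have "P0 d m (g0 d m)" unfolding g0_def by (rule someI_ex) (use that I0_def in auto)
        then show ?thesis unfolding P0_def by blast
      qed
      then show ?thesis using 0 A0' unfolding A0_def by auto
    next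
      case (Suc j)
      have "g j a d m \<in> ?X" if "(a, d, m) \<in> I j (A j)" for a d m
      proof -
        have "P j a d m (g j a d m)" unfolding g_def by (rule someI_ex) (use that I_def in auto)
        then show ?thesis unfolding P_def by blast
      qed
      then show ?thesis using Suc AS by auto
    qed
    have natD: "|UNIV::nat set| \<le>o |D|" using False infinite_iff_card_of_nat by blast
    have DN: "|D \<times> (UNIV::nat set)| \<le>o |D|"
      by (rule card_of_Times_ordLeq_infinite_Field)
        (simp_all add: Field_card_of card_of_Card_order card_of_card_order_on False natD ordLeq_refl)
    have Acard: "|A k| \<le>o |D|" for k
    proof (induction k)
      case 0
      have "|A 0| \<le>o |I0|" unfolding A0' A0_def by (rule card_of_image)
      also have "|I0| \<le>o |D \<times> (UNIV::nat set)|" by (rule card_of_mono1) (auto simp: I0_def)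
      also have "|D \<times> (UNIV::nat set)| \<le>o |D|" by (rule DN)
      finally show ?case .
    next
      case (Suc k)
      have "|A (Suc k)| \<le>o |I k (A k)|" unfolding AS by (rule card_of_image)
      also have "|I k (A k)| \<le>o |A k \<times> (D \<times> (UNIV::nat set))|"
        by (rule card_of_mono1) (auto simp: I_def)
      also have "|A k \<times> (D \<times> (UNIV::nat set))| \<le>o |D|"
        by (rule card_of_Times_ordLeq_infinite_Field)
          (simp_all add: Field_card_of card_of_Card_order card_of_card_order_on False Suc.IH DN)
      finally show ?case .
    qed
    define AA where "AA = (\<Union>k. A k)"
    have AAcard: "|AA| \<le>o |D|" unfolding AA_def
      by (rule card_of_UNION_ordLeq_infinite) (use False natD Acard in auto)
    have AAX: "AA \<subseteq> ?X" unfolding AA_def using AX by blast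
    define X0 where "X0 = closure AA \<inter> ?X"
    have step: "\<exists>a' x'. (a' \<in> A (Suc k) \<and> x' \<in> ?X \<and> dist a' x' < (1/2)^Suc k \<and> f x' = f x)
                  \<and> dist a a' < (1/2)^k"
      if a: "a \<in> A k" and x: "x \<in> ?X" and ax: "dist a x < (1/2)^k" for k a x
    proof -
      obtain d m where dm: "d \<in> D" "dist d (f x) < 1 / real (Suc m)"
        "ball d (1 / real (Suc m)) \<inter> Y' \<subseteq> f ` (ball x ((1/2)^Suc k) \<inter> ?X)"
        using K[OF x, of "(1/2)^Suc k"] by auto
      have Pk: "P k a d m x" unfolding P_def using x ax dm(3) by blast
      define a' where "a' = g k a d m"
      have Pa: "P k a d m a'" unfolding a'_def g_def by (rule someI_ex) (use Pk in blast)
      have "(a, d, m) \<in> I k (A k)" unfolding I_def using a dm(1) Pk by blast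
      then have a'A: "a' \<in> A (Suc k)" unfolding AS a'_def by force
      have "f x \<in> ball d (1 / real (Suc m)) \<inter> Y'" using dm(2) x by simp
      then have "f x \<in> f ` (ball a' ((1/2)^Suc k) \<inter> ?X)" using Pa unfolding P_def by blast
      then obtain x' where x': "x' \<in> ball a' ((1/2)^Suc k)" "x' \<in> ?X" "f x' = f x" by auto
      show ?thesis
        using a'A x' Pa unfolding P_def mem_ball by metis
    qed
    have base: "\<exists>a x'. a \<in> A 0 \<and> x' \<in> ?X \<and> dist a x' < 1 \<and> f x' = f x"
      if x: "x \<in> ?X" for x
    proof -
      obtain d m where dm: "d \<in> D" "dist d (f x) < 1 / real (Suc m)"
        "ball d (1 / real (Suc m)) \<inter> Y' \<subseteq> f ` (ball x 1 \<inter> ?X)"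
        using K[OF x, of 1] by auto
      have Pk: "P0 d m x" unfolding P0_def using x dm(3) by blast
      define a' where "a' = g0 d m"
      have Pa: "P0 d m a'" unfolding a'_def g0_def by (rule someI_ex) (use Pk in blast)
      have "(d, m) \<in> I0" unfolding I0_def using dm(1) Pk by blast
      then have a'A: "a' \<in> A 0" unfolding A0' A0_def a'_def by force
      have "f x \<in> ball d (1 / real (Suc m)) \<inter> Y'" using dm(2) x by simp
      then have "f x \<in> f ` (ball a' 1 \<inter> ?X)" using Pa unfolding P0_def by blast
      then obtain x' where x': "x' \<in> ball a' 1" "x' \<in> ?X" "f x' = f x" by auto
      show ?thesis
        using a'A x' unfolding mem_ball by metis
    qed
    have surj: "y \<in> f ` X0" if y: "y \<in> Y'" for y
    proof -
      have "y \<in> f ` ?X" unfolding assms(3) by (rule y)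
      then obtain x0 where x0: "x0 \<in> ?X" "f x0 = y" by (rule imageE) simp
      define Q where "Q n p \<longleftrightarrow> fst p \<in> A n \<and> snd p \<in> ?X \<and> dist (fst p) (snd p) < (1/2::real)^n
         \<and> f (snd p) = y" for n p
      have "\<exists>s. \<forall>n. Q n (s n) \<and> dist (fst (s n)) (fst (s (Suc n))) < (1/2)^n"
      proof (rule dependent_nat_choice)
        show "\<exists>p. Q 0 p" using base[OF x0(1)] x0(2) unfolding Q_def by auto
      next
        fix p n assume "Q n p"
        then have h: "fst p \<in> A n" "snd p \<in> ?X" "dist (fst p) (snd p) < (1/2)^n" "f (snd p) = y"
          unfolding Q_def by auto
        obtain a' x' where "a' \<in> A (Suc n)" "x' \<in> ?X" "dist a' x' < (1/2)^Suc n" "f x' = f (snd p)"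
          "dist (fst p) a' < (1/2)^n"
          using step[OF h(1,2,3)] by blast
        then show "\<exists>p'. Q (Suc n) p' \<and> dist (fst p) (fst p') < (1/2)^n"
          using h(4) unfolding Q_def by (intro exI[of _ "(a', x')"]) simp
      qed
      then obtain s where s: "\<And>n. Q n (s n)" "\<And>n. dist (fst (s n)) (fst (s (Suc n))) < (1/2)^n"
        by blast
      define a where "a n = fst (s n)" for n
      define z where "z n = snd (s n)" for n
      have aA: "a n \<in> AA" for n using s(1)[of n] unfolding Q_def a_def AA_def by blast
      have az: "dist (a n) (z n) < (1/2)^n" for n using s(1)[of n] unfolding Q_def a_def z_def by blast
      have fz: "f (z n) = y" for n using s(1)[of n] unfolding Q_def z_def by blast
      have "Cauchy a" by (rule geo_cauchy) (use s(2) in \<open>simp add: a_def\<close>)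
      then obtain L where L: "a \<longlonglongrightarrow> L" using Cauchy_convergent_iff convergent_def by blast
      have Ld: "(\<lambda>n. dist (a n) L) \<longlonglongrightarrow> 0" using L tendsto_dist_iff by blast
      have g0: "(\<lambda>n. (1/2::real)^n + dist (a n) L) \<longlonglongrightarrow> 0"
        using tendsto_add_zero[OF LIMSEQ_realpow_zero[of "1/2::real"] Ld] by simp
      have "(\<lambda>n. dist (z n) L) \<longlonglongrightarrow> 0"
      proof (rule Lim_null_comparison[OF _ g0], rule always_eventually, rule allI)
        fix n
        have "dist (z n) L \<le> dist (z n) (a n) + dist (a n) L" by (rule dist_triangle)
        moreover have "dist (z n) (a n) = dist (a n) (z n)" by (rule dist_commute)
        ultimately show "norm (dist (z n) L) \<le> (1/2)^n + dist (a n) L" using az[of n] by simp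
      qed
      then have zL: "z \<longlonglongrightarrow> L" using tendsto_dist_iff by blast
      have "isCont f L" using assms(1) continuous_on_eq_continuous_at by blast
      then have "(\<lambda>n. f (z n)) \<longlonglongrightarrow> f L" using zL isCont_tendsto_compose by blast
      then have "(\<lambda>n. y) \<longlonglongrightarrow> f L" using fz by simp
      then have fL: "f L = y" using LIMSEQ_const_iff[of y "f L"] by simp
      have "L \<in> closure AA" unfolding closure_sequential using aA L by blast
      then have "L \<in> X0" unfolding X0_def using fL y by simp
      then show ?thesis using fL by blast
    qed
    have sub: "X0 \<subseteq> ?X" unfolding X0_def by blast
    have "closedin (top_of_set ?X) (?X \<inter> closure AA)" by (rule closedin_closed_Int) simp
    then have cl: "closedin (top_of_set ?X) X0" unfolding X0_def by (simp add: Int_commute)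
    have img: "f ` X0 = Y'" using surj sub by blast
    have "dense_subset AA X0" unfolding dense_subset_def X0_def using AAX closure_subset by blast
    then have "dens X0 \<le>o |AA|" by (rule dens_le)
    also have "|AA| \<le>o |D|" by (rule AAcard)
    also have "|D| =o dens Y'" by (rule Dc)
    finally have up: "dens X0 \<le>o dens Y'" .
    have iso: "(dens X0, dens Y') \<in> ordIso"
      unfolding ordIso_iff_ordLeq by (rule conjI[OF up lower[OF sub img]])
    show ?thesis by (rule exI[of _ "X0"], intro conjI; fact)
  qed
qed

end
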